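(* Assume (H3): for all $m$ and all $(x,v)\in X^m\times Y^m$, if $I(x)\cap\mathrm{supp}_{\iota_X(n)}(w)\neq\emptyset$ for some $n$, then for all $k=n,\dots,m$, $\mathrm{proj}_{m\to k}(\Phi^{(m)}(x,v))=\Phi^{(k)}(\mathrm{proj}_{m\to k}(x,v))$. Then for all $n\in\mathbb{N}$, the involution $\Phi^{(n)}$ maps $\mathbb{S}^{\mathrm{valid}}_n$ into $\mathbb{S}^{\mathrm{valid}}_n$; i.e. if $(x,v)\in\mathbb{S}^{\mathrm{valid}}_n$ then $\Phi^{(n)}(x,v)\in\mathbb{S}^{\mathrm{valid}}_n$.
   Context: $\mathbb{2}=\{\mathsf{T},\mathsf{F}\}$, $\Omega=\mathbb{R}\cup\mathbb{2}$, trace space $\mathbb{T}=\bigcup_{n\ge0}\Omega^n$; $w:\mathbb{T}\to[0,\infty)$ is a measurable tree representable function (prefix property: if $t\in\mathrm{supp}_n(w)$ then no proper prefix of $t$ is in $\mathrm{supp}(w)$; type property: if $t\in\mathrm{supp}_n(w)$, $k<n$ and $s\in\Omega$ lies in the other of $\mathbb{R},\mathbb{2}$ than $t_{k+1}$, then $t^{1\dots k}++[s]\notin\mathrm{supp}(w)$), where $\mathrm{supp}(w)=\{t\mid w(t)>0\}$ and $\mathrm{supp}_m(w)=\mathrm{supp}(w)\cap\Omega^m$. Entropy space $\mathbb{E}=\mathbb{R}\times\mathbb{2}$. A trace $t$ is an instance of $x\in\mathbb{E}^m$ if $|t|\le m$ and $t_i\in\{r_i,a_i\}$ for $i\le|t|$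 where $x_i=(r_i,a_i)$; $I(x)$ is the set of instances. Fix strictly monotone $\iota_X,\iota_Y:\mathbb{N}\to\mathbb{N}$, $X^n=\mathbb{E}^{\iota_X(n)}$, $Y^n=\mathbb{E}^{\iota_Y(n)}$; every trace in $\mathrm{supp}(w)$ has length $\iota_X(k)$ for some $k$. For $k\le n$, $\mathrm{proj}_{n\to k}(x,v)=(x^{1\dots\iota_X(k)},v^{1\dots\iota_Y(k)})$. For each $n$, $\Phi^{(n)}$ is an involution of $X^n\times Y^n$. The set of valid states is defined by recursion on $n$: an $n$-dimensional state $(x,v)\in X^n\times Y^n$ is valid, written $(x,v)\in\mathbb{S}^{\mathrm{valid}}_n$, if (i) $I(x)\cap\mathrm{supp}(w)\neq\emptyset$; (ii) writing $(y,u)=\Phi^{(n)}(x,v)$, $I(y)\cap\mathrm{supp}(w)\neq\emptyset$; and (iii) $\mathrm{proj}_{n\to k}(x,v)\notin\mathbb{S}^{\mathrm{valid}}_k$ for all $k<n$. *)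

theory Defs
  imports Complex_Main
begin

datatype omega = R real | B bool

type_synonym trace = "omega list"

text \<open>Entropy space E = R x 2; elements of E^m are lists of length m.\<close>
type_synonym entropy = "real \<times> bool"

definition supp :: "(trace \<Rightarrow> real) \<Rightarrow> trace set" where
  "supp w = {t. w t > 0}"

definition supp_n :: "(trace \<Rightarrow> real) \<Rightarrow> nat \<Rightarrow> trace set" where
  "supp_n w m = {t \<in> supp w. length t = m}"

definition is_real :: "omega \<Rightarrow> bool" where
  "is_real s = (\<exists>r. s = R r)"

text \<open>Tree representable (measurability omitted).\<close>
definition tree_representable :: "(trace \<Rightarrow> real) \<Rightarrow> bool" where
  "tree_representable w \<longleftrightarrow>
     (\<forall>t. w t \<ge> 0) \<and>
     (\<forall>t \<in> supp w. \<forall>k < length t. take k t \<notin> supp w) \<and>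
     (\<forall>t \<in> supp w. \<forall>k < length t. \<forall>s. is_real s \<noteq> is_real (t ! k)
         \<longrightarrow> take k t @ [s] \<notin> supp w)"

definition instances :: "entropy list \<Rightarrow> trace set" where
  "instances x = {t. length t \<le> length x \<and>
     (\<forall>i < length t. t ! i \<in> {R (fst (x ! i)), B (snd (x ! i))})}"

definition proj :: "(nat \<Rightarrow> nat) \<Rightarrow> (nat \<Rightarrow> nat) \<Rightarrow> nat \<Rightarrow>
    entropy list \<times> entropy list \<Rightarrow> entropy list \<times> entropy list" where
  "proj \<iota>X \<iota>Y k xv = (take (\<iota>X k) (fst xv), take (\<iota>Y k) (snd xv))"

definition state_space :: "(nat \<Rightarrow> nat) \<Rightarrow> (nat \<Rightarrow> nat) \<Rightarrow> nat \<Rightarrow>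
    (entropy list \<times> entropy list) set" where
  "state_space \<iota>X \<iota>Y n = {(x, v). length x = \<iota>X n \<and> length v = \<iota>Y n}"

definition involution_on :: "'a set \<Rightarrow> ('a \<Rightarrow> 'a) \<Rightarrow> bool" where
  "involution_on S f \<longleftrightarrow> (\<forall>z \<in> S. f z \<in> S \<and> f (f z) = z)"

function valid :: "(trace \<Rightarrow> real) \<Rightarrow> (nat \<Rightarrow> nat) \<Rightarrow> (nat \<Rightarrow> nat) \<Rightarrow>
    (nat \<Rightarrow> entropy list \<times> entropy list \<Rightarrow> entropy list \<times> entropy list) \<Rightarrow>
    nat \<Rightarrow> entropy list \<times> entropy list \<Rightarrow> bool" where
  "valid w \<iota>X \<iota>Y \<Phi> n xv \<longleftrightarrow>
     xv \<in> state_space \<iota>X \<iota>Y n \<and>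
     instances (fst xv) \<inter> supp w \<noteq> {} \<and>
     instances (fst (\<Phi> n xv)) \<inter> supp w \<noteq> {} \<and>
     (\<forall>k \<in> {..<n}. \<not> valid w \<iota>X \<iota>Y \<Phi> k (proj \<iota>X \<iota>Y k xv))"
  by pat_completeness auto
termination
  by (relation "measure (\<lambda>(w, \<iota>X, \<iota>Y, \<Phi>, n, xv). n)") auto

definition valid_states where
  "valid_states w \<iota>X \<iota>Y \<Phi> n = {xv. valid w \<iota>X \<iota>Y \<Phi> n xv}"

end

theory Submission
  imports Defs
begin

lemma inst_take: "s \<in> instances (take a y) \<Longrightarrow> s \<in> instances y"
  unfolding instances_def by auto

theorem propositionB6:
  fixes w :: "trace \<Rightarrow> real"
    and \<iota>X \<iota>Y :: "nat \<Rightarrow> nat"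
    and \<Phi> :: "nat \<Rightarrow> entropy list \<times> entropy list \<Rightarrow> entropy list \<times> entropy list"
  assumes tree: "tree_representable w"
    and monoX: "strict_mono \<iota>X"
    and monoY: "strict_mono \<iota>Y"
    and lens: "\<forall>t \<in> supp w. \<exists>k. length t = \<iota>X k"
    and invol: "\<forall>n. involution_on (state_space \<iota>X \<iota>Y n) (\<Phi> n)"
    and H3: "\<forall>m. \<forall>xv \<in> state_space \<iota>X \<iota>Y m. \<forall>n.
               instances (fst xv) \<inter> supp_n w (\<iota>X n) \<noteq> {} \<longrightarrow>
               (\<forall>k \<in> {n..m}. proj \<iota>X \<iota>Y k (\<Phi> m xv) = \<Phi> k (proj \<iota>X \<iota>Y k xv))"
  shows "\<forall>n. \<forall>xv \<in> valid_states w \<iota>X \<iota>Y \<Phi> n. \<Phi> n xv \<in> valid_states w \<iota>X \<iota>Y \<Phi> n"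
proof -
  have main: "\<And>xv. valid w \<iota>X \<iota>Y \<Phi> n xv \<Longrightarrow> valid w \<iota>X \<iota>Y \<Phi> n (\<Phi> n xv)" for n
  proof (induction n rule: less_induct)
    case (less n)
    fix xv assume V: "valid w \<iota>X \<iota>Y \<Phi> n xv"
    have VV: "xv \<in> state_space \<iota>X \<iota>Y n \<and> instances (fst xv) \<inter> supp w \<noteq> {} \<and>
      instances (fst (\<Phi> n xv)) \<inter> supp w \<noteq> {} \<and>
      (\<forall>k \<in> {..<n}. \<not> valid w \<iota>X \<iota>Y \<Phi> k (proj \<iota>X \<iota>Y k xv))"
      using V by (subst (asm) valid.simps)
    have ss: "xv \<in> state_space \<iota>X \<iota>Y n"
      and I1: "instances (fst xv) \<inter> supp w \<noteq> {}"
      and I2: "instances (fst (\<Phi> n xv)) \<inter> supp w \<noteq> {}"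
      and nv: "\<forall>k \<in> {..<n}. \<not> valid w \<iota>X \<iota>Y \<Phi> k (proj \<iota>X \<iota>Y k xv)"
      using VV by blast+
    define yu where "yu = \<Phi> n xv"
    have yss: "yu \<in> state_space \<iota>X \<iota>Y n" and bk: "\<Phi> n yu = xv"
      using invol ss unfolding involution_on_def yu_def by meson+
    have nv': "\<forall>k \<in> {..<n}. \<not> valid w \<iota>X \<iota>Y \<Phi> k (proj \<iota>X \<iota>Y k yu)"
    proof
      fix k assume k: "k \<in> {..<n}"
      show "\<not> valid w \<iota>X \<iota>Y \<Phi> k (proj \<iota>X \<iota>Y k yu)"
      proof
        assume Vk: "valid w \<iota>X \<iota>Y \<Phi> k (proj \<iota>X \<iota>Y k yu)"
        then have "instances (fst (proj \<iota>X \<iota>Y k yu)) \<inter> supp w \<noteq> {}"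
          by (subst (asm) valid.simps) blast
        then obtain s where s1: "s \<in> instances (take (\<iota>X k) (fst yu))" and s2: "s \<in> supp w"
          unfolding proj_def by auto
        have s3: "s \<in> instances (fst yu)" using inst_take[OF s1] .
        obtain j where j: "length s = \<iota>X j" using lens s2 by blast
        have "length s \<le> \<iota>X k" using s1 unfolding instances_def by auto
        then have jk: "j \<le> k" using j monoX strict_mono_less_eq by metis
        have "s \<in> supp_n w (\<iota>X j)" using s2 j unfolding supp_n_def by auto
        then have "instances (fst yu) \<inter> supp_n w (\<iota>X j) \<noteq> {}" using s3 by blast
        then have "proj \<iota>X \<iota>Y k (\<Phi> n yu) = \<Phi> k (proj \<iota>X \<iota>Y k yu)"
          using H3 yss jk k by (auto simp del: valid.simps)
        then have eq: "proj \<iota>X \<iota>Y k xv = \<Phi> k (proj \<iota>X \<iota>Y k yu)" using bk by (simp del: valid.simps)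
        have "valid w \<iota>X \<iota>Y \<Phi> k (\<Phi> k (proj \<iota>X \<iota>Y k yu))"
          using less.IH[of k] k Vk by blast
        then show False using nv k eq by metis
      qed
    qed
    show "valid w \<iota>X \<iota>Y \<Phi> n (\<Phi> n xv)"
      unfolding yu_def[symmetric]
      apply (subst valid.simps)
      using yss I2 I1 bk nv' unfolding yu_def by (auto simp del: valid.simps)
  qed
  show ?thesis unfolding valid_states_def using main by (auto simp del: valid.simps)
qed

end
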